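(* Let $n\ge2$ and let $P_n$ be the path with vertex set $\{1,\dots,n\}$ and edges $\{k,k+1\}$. If $S$ is the eigenvalue support of an edge state $e_k-e_{k+1}$ ($1\le k\le n-1$) with respect to the Laplacian of $P_n$, then $|S|\ge n/2$.
   Context: Let $L$ be the Laplacian of a graph with spectral decomposition $L=\sum_r\theta_rE_r$ ($\theta_r$ distinct eigenvalues, $E_r$ orthogonal projections onto eigenspaces). The eigenvalue support of a vector $x$ is the set of $\theta_r$ with $E_rx\neq0$. *)

theory Defs
  imports Complex_Main
begin

text \<open>Vectors in R^V for a finite vertex set V are modelled as functions
  nat => real that vanish outside V.\<close>

definition vecs :: "nat set \<Rightarrow> (nat \<Rightarrow> real) set" where
  "vecs V = {v. \<forall>i. i \<notin> V \<longrightarrow> v i = 0}"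

definition inner_V :: "nat set \<Rightarrow> (nat \<Rightarrow> real) \<Rightarrow> (nat \<Rightarrow> real) \<Rightarrow> real" where
  "inner_V V x y = (\<Sum>i\<in>V. x i * y i)"

definition laplacian :: "nat set \<Rightarrow> (nat \<Rightarrow> nat \<Rightarrow> bool) \<Rightarrow> (nat \<Rightarrow> real) \<Rightarrow> (nat \<Rightarrow> real)" where
  "laplacian V adj v = (\<lambda>i. if i \<in> V then (\<Sum>j\<in>V. if adj i j then v i - v j else 0) else 0)"

definition path_vertices :: "nat \<Rightarrow> nat set" where
  "path_vertices n = {1..n}"

definition path_adj :: "nat \<Rightarrow> nat \<Rightarrow> bool" where
  "path_adj i j = (j = i + 1 \<or> i = j + 1)"

definition path_laplacian :: "nat \<Rightarrow> (nat \<Rightarrow> real) \<Rightarrow> (nat \<Rightarrow> real)" where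
  "path_laplacian n = laplacian (path_vertices n) path_adj"

text \<open>Eigenspace of a linear map M on R^V for theta (= {0} if theta is not an eigenvalue).\<close>
definition eigenspace_V :: "nat set \<Rightarrow> ((nat \<Rightarrow> real) \<Rightarrow> (nat \<Rightarrow> real)) \<Rightarrow> real \<Rightarrow> (nat \<Rightarrow> real) set" where
  "eigenspace_V V M \<theta> = {v \<in> vecs V. M v = (\<lambda>i. \<theta> * v i)}"

definition eig_proj :: "nat set \<Rightarrow> ((nat \<Rightarrow> real) \<Rightarrow> (nat \<Rightarrow> real)) \<Rightarrow> real \<Rightarrow> (nat \<Rightarrow> real) \<Rightarrow> (nat \<Rightarrow> real)" where
  "eig_proj V M \<theta> x = (THE p. p \<in> eigenspace_V V M \<theta> \<and>
      (\<forall>w \<in> eigenspace_V V M \<theta>. inner_V V (\<lambda>i. x i - p i) w = 0))"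

definition eig_support :: "nat set \<Rightarrow> ((nat \<Rightarrow> real) \<Rightarrow> (nat \<Rightarrow> real)) \<Rightarrow> (nat \<Rightarrow> real) \<Rightarrow> real set" where
  "eig_support V M x = {\<theta>. eig_proj V M \<theta> x \<noteq> (\<lambda>_. 0)}"

definition basis_vec :: "nat \<Rightarrow> (nat \<Rightarrow> real)" where
  "basis_vec k = (\<lambda>i. if i = k then 1 else 0)"

end

theory Submission imports Defs "HOL-Computational_Algebra.Polynomial" begin

lemma lap_row:
  assumes "i \<in> {1..n}"
  shows "path_laplacian n w i = (if 1 < i then w i - w (i-1) else 0) + (if i < n then w i - w (Suc i) else 0)"
proof -
  have "path_laplacian n w i = (\<Sum>j\<in>{1..n}. (if j = Suc i then w i - w j else 0) + (if 1 < i then (if j = i - 1 then w i - w j else 0) else 0))"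
    unfolding path_laplacian_def laplacian_def path_vertices_def using assms
    by (auto intro!: sum.cong simp: path_adj_def)
  also have "\<dots> = (if i < n then w i - w (Suc i) else 0) + (if 1 < i then w i - w (i-1) else 0)"
    using assms by (cases "1 < i") (auto simp: sum.distrib)
  finally show ?thesis by simp
qed

lemma lap_out: "i \<notin> {1..n} \<Longrightarrow> path_laplacian n w i = 0"
  unfolding path_laplacian_def laplacian_def path_vertices_def by auto

lemma lap_scale: "path_laplacian n (\<lambda>i. a * u i) = (\<lambda>i. a * path_laplacian n u i)"
  unfolding path_laplacian_def laplacian_def by (rule ext) (auto simp: sum_distrib_left algebra_simps intro!: sum.cong)

lemma lap_zero: "path_laplacian n (\<lambda>i. 0) = (\<lambda>i. 0)"
  using lap_scale[of n 0 "\<lambda>i. 0"] by simp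

fun gp :: "nat \<Rightarrow> real poly" where
  "gp 0 = 1"
| "gp (Suc 0) = [:1, -1:]"
| "gp (Suc (Suc m)) = [:2, -1:] * gp (Suc m) - gp m"

lemma degree_gp: "degree (gp m) = m"
proof (induction m rule: gp.induct)
  case (3 m)
  have nz: "gp (Suc m) \<noteq> 0" using 3(1) by (metis degree_0 nat.distinct(1))
  have d: "degree ([:2, -1:] * gp (Suc m)) = Suc (Suc m)"
    using nz 3(1) by (subst degree_mult_eq) auto
  have "degree ([:2, -1:] * gp (Suc m) + (- gp m)) = Suc (Suc m)"
    using d 3(2) by (subst degree_add_eq_left) auto
  then show ?case by simp
qed auto

lemma eig_rec:
  assumes "w \<in> eigenspace_V (path_vertices n) (path_laplacian n) \<theta>" and "m < n"
  shows "w (Suc m) = w 1 * poly (gp m) \<theta>"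
  using assms(2)
proof (induction m rule: gp.induct)
  case 1 then show ?case by simp
next
  case 2
  have "path_laplacian n w 1 = \<theta> * w 1" using assms(1) unfolding eigenspace_V_def by (auto dest: fun_cong)
  moreover have "path_laplacian n w 1 = w 1 - w (Suc 1)" using 2 by (subst lap_row) auto
  ultimately have "w (Suc 1) = w 1 * (1 - \<theta>)" by (simp add: algebra_simps)
  then show ?case by simp
next
  case (3 m)
  have "path_laplacian n w (Suc (Suc m)) = \<theta> * w (Suc (Suc m))" using assms(1) unfolding eigenspace_V_def by (auto dest: fun_cong)
  moreover have "path_laplacian n w (Suc (Suc m)) = (w (Suc (Suc m)) - w (Suc m)) + (w (Suc (Suc m)) - w (Suc (Suc (Suc m))))"
    using 3(3) by (subst lap_row) auto
  ultimately have "w (Suc (Suc (Suc m))) = (2 - \<theta>) * w (Suc (Suc m)) - w (Suc m)" by (simp add: algebra_simps)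
  with 3 show ?case by (simp add: algebra_simps)
qed

lemma eig_scalar:
  assumes u: "u \<in> eigenspace_V (path_vertices n) (path_laplacian n) \<theta>"
    and w: "w \<in> eigenspace_V (path_vertices n) (path_laplacian n) \<theta>"
    and u1: "u 1 \<noteq> 0"
  shows "w = (\<lambda>i. (w 1 / u 1) * u i)"
proof
  fix i
  show "w i = w 1 / u 1 * u i"
  proof (cases "i \<in> {1..n}")
    case True
    then obtain m where m: "i = Suc m" "m < n" by (cases i) auto
    show ?thesis using eig_rec[OF u m(2)] eig_rec[OF w m(2)] u1 m(1) by simp
  next
    case False
    then show ?thesis using u w unfolding eigenspace_V_def vecs_def path_vertices_def by auto
  qed
qed

lemma inner_lin: "inner_V V (\<lambda>i. x i - c * u i) u = inner_V V x u - c * inner_V V u u"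
  unfolding inner_V_def by (simp add: sum_subtractf sum_distrib_left algebra_simps)

lemma scale_in:
  assumes "u \<in> eigenspace_V (path_vertices n) (path_laplacian n) \<theta>"
  shows "(\<lambda>i. a * u i) \<in> eigenspace_V (path_vertices n) (path_laplacian n) \<theta>"
  using assms unfolding eigenspace_V_def vecs_def by (auto simp: lap_scale fun_eq_iff dest: fun_cong)

lemma proj_formula:
  assumes u: "u \<in> eigenspace_V (path_vertices n) (path_laplacian n) \<theta>"
    and u1: "u 1 \<noteq> 0" and uu: "inner_V (path_vertices n) u u \<noteq> 0"
  shows "eig_proj (path_vertices n) (path_laplacian n) \<theta> x =
     (\<lambda>i. (inner_V (path_vertices n) x u / inner_V (path_vertices n) u u) * u i)"
  unfolding eig_proj_def
proof (rule the_equality)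
  let ?E = "eigenspace_V (path_vertices n) (path_laplacian n) \<theta>"
  let ?a = "inner_V (path_vertices n) x u / inner_V (path_vertices n) u u"
  show "(\<lambda>i. ?a * u i) \<in> ?E \<and> (\<forall>w\<in>?E. inner_V (path_vertices n) (\<lambda>i. x i - ?a * u i) w = 0)"
  proof (intro conjI ballI)
    show "(\<lambda>i. ?a * u i) \<in> ?E" by (rule scale_in[OF u])
    fix w assume w: "w \<in> ?E"
    have "w = (\<lambda>i. (w 1 / u 1) * u i)" by (rule eig_scalar[OF u w u1])
    then have "inner_V (path_vertices n) (\<lambda>i. x i - ?a * u i) w
       = (w 1 / u 1) * inner_V (path_vertices n) (\<lambda>i. x i - ?a * u i) u"
      unfolding inner_V_def by (subst (1) \<open>w = _\<close>) (simp add: sum_distrib_left algebra_simps)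
    also have "\<dots> = 0" using uu by (subst inner_lin) simp
    finally show "inner_V (path_vertices n) (\<lambda>i. x i - ?a * u i) w = 0" .
  qed
next
  let ?E = "eigenspace_V (path_vertices n) (path_laplacian n) \<theta>"
  let ?a = "inner_V (path_vertices n) x u / inner_V (path_vertices n) u u"
  fix p assume p: "p \<in> ?E \<and> (\<forall>w\<in>?E. inner_V (path_vertices n) (\<lambda>i. x i - p i) w = 0)"
  have pe: "p = (\<lambda>i. (p 1 / u 1) * u i)" using eig_scalar[OF u _ u1] p by blast
  have "inner_V (path_vertices n) (\<lambda>i. x i - p i) u = 0" using p u by blast
  then have "inner_V (path_vertices n) (\<lambda>i. x i - (p 1 / u 1) * u i) u = 0"
    by (subst (asm) pe) simp
  then have "inner_V (path_vertices n) x u - (p 1 / u 1) * inner_V (path_vertices n) u u = 0"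
    by (simp only: inner_lin)
  then have "p 1 / u 1 = ?a" using uu by (simp add: field_simps)
  then show "p = (\<lambda>i. ?a * u i)" using pe by simp
qed

lemma proj_zero:
  assumes "\<forall>w \<in> eigenspace_V (path_vertices n) (path_laplacian n) \<theta>. w = (\<lambda>i. 0)"
  shows "eig_proj (path_vertices n) (path_laplacian n) \<theta> x = (\<lambda>i. 0)"
  unfolding eig_proj_def
proof (rule the_equality)
  let ?E = "eigenspace_V (path_vertices n) (path_laplacian n) \<theta>"
  show "(\<lambda>i. 0) \<in> ?E \<and> (\<forall>w\<in>?E. inner_V (path_vertices n) (\<lambda>i. x i - 0) w = 0)"
  proof (intro conjI ballI)
    show "(\<lambda>i. 0) \<in> ?E"
      unfolding eigenspace_V_def vecs_def by (simp add: lap_zero)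
    fix w assume "w \<in> ?E"
    then have "w = (\<lambda>i. 0)" using assms by blast
    then show "inner_V (path_vertices n) (\<lambda>i. x i - 0) w = 0" by (simp add: inner_V_def)
  qed
next
  fix p assume "p \<in> eigenspace_V (path_vertices n) (path_laplacian n) \<theta> \<and>
    (\<forall>w\<in>eigenspace_V (path_vertices n) (path_laplacian n) \<theta>. inner_V (path_vertices n) (\<lambda>i. x i - p i) w = 0)"
  then show "p = (\<lambda>i. 0)" using assms by blast
qed

definition Qp :: "nat \<Rightarrow> real poly" where
  "Qp n = [:0, 1:] * gp (n - 1) - (gp (n - 1) - gp (n - 2))"

lemma Qp_nz: assumes "n \<ge> 2" shows "Qp n \<noteq> 0"
proof -
  have d1: "degree ([:0, 1:] * gp (n - 1)) = n"
  proof -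
    have "gp (n - 1) \<noteq> 0" using degree_gp[of "n-1"] assms by (intro notI) simp
    then show ?thesis using degree_gp[of "n-1"] assms by (subst degree_mult_eq) auto
  qed
  have "degree (gp (n - 1) - gp (n - 2)) \<le> n - 1"
    using degree_diff_le_max[of "gp (n - 1)" "gp (n - 2)"] by (simp add: degree_gp)
  then have D: "degree (- (gp (n - 1) - gp (n - 2))) < degree ([:0, 1:] * gp (n - 1))"
    using assms d1 by (simp only: degree_minus)
  have "Qp n = [:0, 1:] * gp (n - 1) + - (gp (n - 1) - gp (n - 2))"
    unfolding Qp_def by (simp only: diff_conv_add_uminus)
  then have "degree (Qp n) = n" using degree_add_eq_left[OF D] d1 by simp
  then show ?thesis using assms by auto
qed

lemma support_roots:
  assumes n: "n \<ge> 2"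
    and ne: "eig_proj (path_vertices n) (path_laplacian n) \<theta> x \<noteq> (\<lambda>i. 0)"
  shows "poly (Qp n) \<theta> = 0"
proof -
  obtain w where w: "w \<in> eigenspace_V (path_vertices n) (path_laplacian n) \<theta>" "w \<noteq> (\<lambda>i. 0)"
    using proj_zero[of n \<theta> x] ne by auto
  have w1: "w 1 \<noteq> 0"
  proof
    assume h: "w 1 = 0"
    have "w = (\<lambda>i. 0)"
    proof
      fix i show "w i = 0"
      proof (cases "i \<in> {1..n}")
        case True
        then obtain m where m: "i = Suc m" "m < n" by (cases i) auto
        show ?thesis using eig_rec[OF w(1) m(2)] h m by simp
      next
        case False
        then show ?thesis using w unfolding eigenspace_V_def vecs_def path_vertices_def by auto
      qed
    qed
    with w(2) show False by simp
  qed
  have "path_laplacian n w n = \<theta> * w n" using w(1) unfolding eigenspace_V_def by (auto dest: fun_cong)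
  moreover have "path_laplacian n w n = w n - w (n - 1)" using n by (subst lap_row) auto
  moreover have "w n = w 1 * poly (gp (n - 1)) \<theta>" using eig_rec[OF w(1), of "n - 1"] n by simp
  moreover have "w (n - 1) = w 1 * poly (gp (n - 2)) \<theta>" using eig_rec[OF w(1), of "n - 2"] n
    by (simp add: Suc_diff_Suc numeral_2_eq_2)
  ultimately have "w 1 * poly (Qp n) \<theta> = 0" unfolding Qp_def by (simp add: algebra_simps)
  then show ?thesis using w1 by simp
qed

lemma support_finite:
  assumes "n \<ge> 2"
  shows "finite (eig_support (path_vertices n) (path_laplacian n) x)"
proof (rule finite_subset[OF _ poly_roots_finite[OF Qp_nz[OF assms]]])
  show "eig_support (path_vertices n) (path_laplacian n) x \<subseteq> {t. poly (Qp n) t = 0}"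
    unfolding eig_support_def using support_roots[OF assms] by blast
qed


lemma count_good:
  fixes n k :: nat
  assumes n: "n \<ge> 2" and k: "1 \<le> k" "k < n"
  shows "n \<le> 2 * card {j\<in>{1..n-1}. \<not> n dvd j * k}"
proof -
  define G where "G = {j\<in>{1..n-1}. \<not> n dvd j * k}"
  define B where "B = {j\<in>{1..n-1}. n dvd j * k}"
  have nk: "\<not> n dvd k" using k by (auto dest: dvd_imp_le)
  have fin: "finite G" "finite B" unfolding G_def B_def by auto
  have "G \<union> B = {1..n-1}" "G \<inter> B = {}" unfolding G_def B_def by auto
  then have sum: "card G + card B = n - 1" using fin card_Un_disjoint[OF fin] by simp
  have ng: "n - 1 \<in> G"
  proof -
    have "(n - 1) * k + k = n * k" using n by (cases n) auto
    then have "\<not> n dvd (n - 1) * k"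
    proof -
      assume e: "(n - 1) * k + k = n * k"
      show ?thesis
      proof
        assume h: "n dvd (n - 1) * k"
        have "n dvd (n - 1) * k + k" unfolding e by simp
        then have "n dvd k" using h dvd_add_right_iff by blast
        with nk show False by simp
      qed
    qed
    then show ?thesis unfolding G_def using n by auto
  qed
  have sub: "(\<lambda>j. j - 1) ` B \<subseteq> G - {n - 1}"
  proof
    fix y assume "y \<in> (\<lambda>j. j - 1) ` B"
    then obtain j where j: "j \<in> B" "y = j - 1" by auto
    have j1: "1 \<le> j" "j \<le> n - 1" "n dvd j * k" using j unfolding B_def by auto
    have "j \<noteq> 1" using j1 nk by auto
    have e: "j * k = (j - 1) * k + k" using j1 by (cases j) auto
    have "\<not> n dvd (j - 1) * k"
    proof
      assume "n dvd (j - 1) * k"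
      then have "n dvd k" using j1(3) e dvd_add_right_iff[of n "(j-1)*k" k] by simp
      with nk show False by simp
    qed
    then show "y \<in> G - {n - 1}" using j1 \<open>j \<noteq> 1\<close> j(2) unfolding G_def by auto
  qed
  have inj: "inj_on (\<lambda>j. j - 1) B" unfolding B_def by (rule inj_onI) auto
  have "card B \<le> card (G - {n - 1})"
    using card_inj_on_le[OF inj sub] fin by auto
  also have "\<dots> = card G - 1" using ng fin by simp
  finally have "card B \<le> card G - 1" .
  moreover have "card G > 0" using ng fin card_gt_0_iff by blast
  ultimately have "card B + 1 \<le> card G" by linarith
  then show ?thesis using sum n unfolding G_def by linarith
qed


definition cc :: "nat \<Rightarrow> nat \<Rightarrow> nat \<Rightarrow> real" where
  "cc n j i = cos ((2 * real i - 1) * (real j * pi / real n) / 2)"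

definition uu :: "nat \<Rightarrow> nat \<Rightarrow> nat \<Rightarrow> real" where
  "uu n j = (\<lambda>i. if i \<in> {1..n} then cc n j i else 0)"

lemma cc_rec: "cc n j m + cc n j (m + 2) = 2 * cos (real j * pi / real n) * cc n j (m + 1)"
proof -
  define t where "t = real j * pi / real n"
  define a where "a = (2 * real (m + 1) - 1) * t / 2"
  have e1: "(2 * real m - 1) * t / 2 = a - t" unfolding a_def by (simp add: algebra_simps)
  have e2: "(2 * real (m + 2) - 1) * t / 2 = a + t" unfolding a_def by (simp add: algebra_simps)
  have "cc n j m + cc n j (m + 2) = cos (a - t) + cos (a + t)"
    unfolding cc_def t_def[symmetric] e1 e2 ..
  also have "\<dots> = 2 * cos t * cos a" by (simp add: cos_add cos_diff)
  finally show ?thesis unfolding cc_def t_def a_def by simp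
qed

lemma cc0: "cc n j 0 = cc n j 1"
  unfolding cc_def by (simp add: cos_minus)

lemma ccn:
  assumes "n > 0"
  shows "cc n j (n + 1) = cc n j n"
proof -
  define t where "t = real j * pi / real n"
  have jp: "real n * t = real j * pi" unfolding t_def using assms by simp
  have e1: "(2 * real (n + 1) - 1) * t / 2 = real j * pi + t / 2" using jp by (simp add: field_simps)
  have e2: "(2 * real n - 1) * t / 2 = real j * pi - t / 2" using jp by (simp add: field_simps)
  show ?thesis unfolding cc_def t_def[symmetric] e1 e2 by (simp add: cos_add cos_diff)
qed

lemma ccdiff: "cc n j k - cc n j (k + 1) = 2 * sin (real k * (real j * pi / real n)) * sin (real j * pi / real n / 2)"
proof -
  define t where "t = real j * pi / real n"
  have e1: "(2 * real k - 1) * t / 2 = real k * t - t / 2" by (simp add: field_simps)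
  have e2: "(2 * real (k + 1) - 1) * t / 2 = real k * t + t / 2" by (simp add: field_simps)
  show ?thesis unfolding cc_def t_def[symmetric] e1 e2 by (simp add: cos_add cos_diff)
qed

lemma uu_eigen:
  assumes n: "n \<ge> 2"
  shows "uu n j \<in> eigenspace_V (path_vertices n) (path_laplacian n) (2 - 2 * cos (real j * pi / real n))"
  unfolding eigenspace_V_def
proof (intro CollectI conjI)
  show "uu n j \<in> vecs (path_vertices n)" unfolding vecs_def uu_def path_vertices_def by auto
  show "path_laplacian n (uu n j) = (\<lambda>i. (2 - 2 * cos (real j * pi / real n)) * uu n j i)"
  proof
    fix i
    show "path_laplacian n (uu n j) i = (2 - 2 * cos (real j * pi / real n)) * uu n j i"
    proof (cases "i \<in> {1..n}")
      case False
      then show ?thesis using lap_out[OF False] False unfolding uu_def by auto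
    next
      case True
      have L: "(if 1 < i then uu n j i - uu n j (i - 1) else 0) = cc n j i - cc n j (i - 1)"
      proof (cases "1 < i")
        case True
        then have "i - 1 \<in> {1..n}" using \<open>i \<in> {1..n}\<close> by auto
        then show ?thesis using True \<open>i \<in> {1..n}\<close> unfolding uu_def by simp
      next
        case False then have "i = 1" using \<open>i \<in> {1..n}\<close> by auto
        then show ?thesis using cc0 by simp
      qed
      have R: "(if i < n then uu n j i - uu n j (Suc i) else 0) = cc n j i - cc n j (i + 1)"
      proof (cases "i < n")
        case True
        then have "Suc i \<in> {1..n}" using \<open>i \<in> {1..n}\<close> by auto
        then show ?thesis using True \<open>i \<in> {1..n}\<close> unfolding uu_def by simp
      next
        case False then have "i = n" using \<open>i \<in> {1..n}\<close> by auto
        then show ?thesis using ccn[of n j] n by simp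
      qed
      have rec: "cc n j (i - 1) + cc n j (i + 1) = 2 * cos (real j * pi / real n) * cc n j i"
        using cc_rec[of n j "i - 1"] True by (simp add: numeral_2_eq_2)
      have "path_laplacian n (uu n j) i = (cc n j i - cc n j (i - 1)) + (cc n j i - cc n j (i + 1))"
        using lap_row[OF True, of "uu n j"] L R by simp
      also have "\<dots> = 2 * cc n j i - (cc n j (i - 1) + cc n j (i + 1))" by simp
      also have "\<dots> = 2 * cc n j i - 2 * cos (real j * pi / real n) * cc n j i" by (simp only: rec)
      also have "\<dots> = (2 - 2 * cos (real j * pi / real n)) * uu n j i"
        using True unfolding uu_def by (simp add: algebra_simps)
      finally show ?thesis .
    qed
  qed
qed


lemma good_in_support:
  fixes n k j :: nat
  assumes n: "n \<ge> 2" and k: "1 \<le> k" "k \<le> n - 1" and j: "1 \<le> j" "j \<le> n - 1"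
    and nd: "\<not> n dvd j * k"
  shows "2 - 2 * cos (real j * pi / real n) \<in> eig_support (path_vertices n) (path_laplacian n)
            (\<lambda>i. basis_vec k i - basis_vec (k + 1) i)"
proof -
  define t where "t = real j * pi / real n"
  define u where "u = uu n j"
  define x where "x = (\<lambda>i. basis_vec k i - basis_vec (k + 1) i)"
  define V where "V = path_vertices n"
  have t0: "0 < t" unfolding t_def using j n by simp
  have tpi: "t < pi" unfolding t_def using j n by (simp add: field_simps)
  have ue: "u \<in> eigenspace_V V (path_laplacian n) (2 - 2 * cos t)"
    unfolding u_def V_def t_def using uu_eigen[OF n] .
  have u1: "u 1 = cos (t / 2)" unfolding u_def uu_def cc_def t_def using n by simp
  have u1p: "u 1 > 0" unfolding u1 using t0 tpi by (intro cos_gt_zero_pi) auto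
  have "u 1 * u 1 \<le> inner_V V u u"
    unfolding inner_V_def V_def path_vertices_def using n
    by (intro member_le_sum[where f = "\<lambda>i. u i * u i"]) auto
  then have uu0: "inner_V V u u \<noteq> 0" using u1p
    by (metis mult_pos_pos not_less order_refl)
  have xu: "inner_V V x u = u k - u (k + 1)"
  proof -
    have kV: "k \<in> V" "k + 1 \<in> V" unfolding V_def path_vertices_def using k n by auto
    have "inner_V V x u = (\<Sum>i\<in>V. (if i = k then u i else 0)) - (\<Sum>i\<in>V. (if i = k + 1 then u i else 0))"
    proof -
      have "inner_V V x u = (\<Sum>i\<in>V. (if i = k then u i else 0) - (if i = k + 1 then u i else 0))"
        unfolding inner_V_def x_def basis_vec_def by (rule sum.cong) auto
      then show ?thesis by (simp only: sum_subtractf)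
    qed
    also have "\<dots> = u k - u (k + 1)" using kV unfolding V_def path_vertices_def by simp
    finally show ?thesis .
  qed
  have "u k - u (k + 1) = cc n j k - cc n j (k + 1)" unfolding u_def uu_def using k n by auto
  also have "\<dots> = 2 * sin (real k * t) * sin (t / 2)" unfolding t_def by (rule ccdiff)
  finally have xu2: "inner_V V x u = 2 * sin (real k * t) * sin (t / 2)" using xu by simp
  have s2: "sin (t / 2) > 0" using t0 tpi by (intro sin_gt_zero) auto
  have sk: "sin (real k * t) \<noteq> 0"
  proof
    assume "sin (real k * t) = 0"
    then obtain m :: int where m: "real k * t = of_int m * pi" by (auto simp: sin_zero_iff_int2)
    then have "real k * real j = of_int m * real n" unfolding t_def using n by (simp add: field_simps)
    then have "int (j * k) = m * int n" by (metis of_int_eq_iff of_int_mult of_int_of_nat_eq of_nat_mult mult.commute)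
    then have "int n dvd int (j * k)" by simp
    then have "n dvd j * k" by (simp only: int_dvd_int_iff)
    with nd show False by simp
  qed
  have xu0: "inner_V V x u \<noteq> 0" using xu2 s2 sk by simp
  have "eig_proj V (path_laplacian n) (2 - 2 * cos t) x = (\<lambda>i. (inner_V V x u / inner_V V u u) * u i)"
    unfolding V_def by (rule proj_formula[OF ue[unfolded V_def] u1p[THEN less_imp_neq, symmetric] uu0[unfolded V_def]])
  moreover have "(inner_V V x u / inner_V V u u) * u 1 \<noteq> 0" using xu0 uu0 u1p by simp
  ultimately have "eig_proj V (path_laplacian n) (2 - 2 * cos t) x \<noteq> (\<lambda>i. 0)" by (metis)
  then show ?thesis unfolding eig_support_def V_def x_def t_def by simp
qed

theorem mainTheorem17:
  fixes n k :: nat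
  assumes "n \<ge> 2" and "1 \<le> k" and "k \<le> n - 1"
  shows "real (card (eig_support (path_vertices n) (path_laplacian n)
            (\<lambda>i. basis_vec k i - basis_vec (k + 1) i))) \<ge> real n / 2"
proof -
  define S where "S = eig_support (path_vertices n) (path_laplacian n) (\<lambda>i. basis_vec k i - basis_vec (k + 1) i)"
  define G where "G = {j\<in>{1..n-1}. \<not> n dvd j * k}"
  define T where "T = (\<lambda>j::nat. 2 - 2 * cos (real j * pi / real n))"
  have fin: "finite S" unfolding S_def using support_finite[OF assms(1)] .
  have sub: "T ` G \<subseteq> S" unfolding S_def G_def T_def using good_in_support[OF assms] by auto
  have inj: "inj_on T G"
  proof (rule inj_onI)
    fix a b assume a: "a \<in> G" and b: "b \<in> G" and e: "T a = T b"
    have "cos (real a * pi / real n) = cos (real b * pi / real n)" using e unfolding T_def by simp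
    moreover have "0 \<le> real a * pi / real n" "real a * pi / real n \<le> pi"
      "0 \<le> real b * pi / real n" "real b * pi / real n \<le> pi"
      using a b assms(1) unfolding G_def by (auto simp: field_simps)
    ultimately have "real a * pi / real n = real b * pi / real n" using cos_inj_pi by blast
    then show "a = b" using assms(1) by (simp add: field_simps)
  qed
  have "card G = card (T ` G)" using card_image[OF inj] by simp
  also have "\<dots> \<le> card S" using card_mono[OF fin sub] .
  finally have cG: "card G \<le> card S" .
  have "n \<le> 2 * card G" unfolding G_def using count_good[of n k] assms by simp
  then have "real n \<le> 2 * real (card S)" using cG by linarith
  then show ?thesis unfolding S_def by simp
qed

end
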